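(* Let $\mathscr G=(\mathscr V,\mathscr E)$ be a finite connected graph with $N$ vertices and $M\ge0$ an integer. The unique stationary distribution $\pi_Z$ of the uniform saving model on $\mathscr C_{N,M}$ is reversible and $$\pi_Z(\xi)=\frac{\mu(\xi)}{\sum_{\eta\in\mathscr C_{N,M}}\mu(\eta)}\quad\text{where}\quad \mu(\xi)=\prod_{z\in\mathscr V}(\xi(z)+1).$$
   Context: $\mathscr C_{N,M}$ is the set of maps $\xi:\mathscr V\to\mathbb N$ with $\sum_x\xi(x)=M$. The uniform saving model is the discrete-time Markov chain on $\mathscr C_{N,M}$: at each step an edge $(x,y)\in\mathscr E$ is chosen uniformly at random; independent $U_1$ uniform on $\{0,\dots,Z_t(x)\}$ and $U_2$ uniform on $\{0,\dots,Z_t(y)\}$ are drawn; given $U_1=c_x,U_2=c_y$, $U$ is drawn uniformly from $\{0,\dots,Z_t(x)+Z_t(y)-c_x-c_y\}$; then $Z_{t+1}(x)=c_x+U$, $Z_{t+1}(y)=Z_t(x)+Z_t(y)-c_x-U$, $Z_{t+1}(z)=Z_t(z)$ for $z\notin\{x,y\}$. This chain has a unique stationary distribution, denoted $\pi_Z$. *)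

theory Defs
  imports Complex_Main
begin

definition configs :: "'a set \<Rightarrow> nat \<Rightarrow> ('a \<Rightarrow> nat) set" where
  "configs V M = {\<xi>. (\<forall>z. z \<notin> V \<longrightarrow> \<xi> z = 0) \<and> (\<Sum>z\<in>V. \<xi> z) = M}"

definition edge_kernel :: "'a \<Rightarrow> 'a \<Rightarrow> ('a \<Rightarrow> nat) \<Rightarrow> ('a \<Rightarrow> nat) \<Rightarrow> real" where
  "edge_kernel x y \<xi> \<eta> =
     (\<Sum>cx\<le>\<xi> x. \<Sum>cy\<le>\<xi> y. \<Sum>u\<le>\<xi> x + \<xi> y - cx - cy.
        if \<eta> = \<xi>(x := cx + u, y := \<xi> x + \<xi> y - cx - u)
        then 1 / (real (\<xi> x + 1) * real (\<xi> y + 1) * real (\<xi> x + \<xi> y - cx - cy + 1))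
        else 0)"

definition usm_kernel :: "('a \<times> 'a) set \<Rightarrow> ('a \<Rightarrow> nat) \<Rightarrow> ('a \<Rightarrow> nat) \<Rightarrow> real" where
  "usm_kernel E \<xi> \<eta> =
     (if E = {} then (if \<xi> = \<eta> then 1 else 0)
      else (\<Sum>(x, y)\<in>E. edge_kernel x y \<xi> \<eta>) / real (card E))"

definition is_distribution :: "('b \<Rightarrow> real) \<Rightarrow> 'b set \<Rightarrow> bool" where
  "is_distribution p S \<longleftrightarrow> (\<forall>s\<in>S. 0 \<le> p s) \<and> (\<Sum>s\<in>S. p s) = 1"

definition is_stationary :: "('b \<Rightarrow> 'b \<Rightarrow> real) \<Rightarrow> ('b \<Rightarrow> real) \<Rightarrow> 'b set \<Rightarrow> bool" where
  "is_stationary P p S \<longleftrightarrow> (\<forall>\<eta>\<in>S. (\<Sum>\<xi>\<in>S. p \<xi> * P \<xi> \<eta>) = p \<eta>)"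

definition is_reversible :: "('b \<Rightarrow> 'b \<Rightarrow> real) \<Rightarrow> ('b \<Rightarrow> real) \<Rightarrow> 'b set \<Rightarrow> bool" where
  "is_reversible P p S \<longleftrightarrow> (\<forall>\<xi>\<in>S. \<forall>\<eta>\<in>S. p \<xi> * P \<xi> \<eta> = p \<eta> * P \<eta> \<xi>)"

definition mu :: "'a set \<Rightarrow> ('a \<Rightarrow> nat) \<Rightarrow> real" where
  "mu V \<xi> = (\<Prod>z\<in>V. real (\<xi> z + 1))"

end

theory Submission
  imports Defs "HOL-Library.FuncSet"
begin

definition mv :: "('a \<Rightarrow> nat) \<Rightarrow> 'a \<Rightarrow> 'a \<Rightarrow> ('a \<Rightarrow> nat)" where
  "mv \<xi> v w = (\<lambda>t. \<xi> t - (if t = v then 1 else 0) + (if t = w then 1 else 0))"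

lemma mv_same: "1 \<le> \<xi> z \<Longrightarrow> mv \<xi> z z = \<xi>"
  by (auto simp: mv_def)

lemma mv_comp: "mv (mv \<xi> z v) v w = mv \<xi> z w"
  by (auto simp: mv_def)

lemma mv_ge: "1 \<le> mv \<xi> z v v"
  by (simp add: mv_def)

lemma sum_two:
  fixes f :: "'a \<Rightarrow> 'b::comm_monoid_add"
  assumes "finite V" "x \<in> V" "y \<in> V" "x \<noteq> y"
  shows "(\<Sum>z\<in>V. f z) = f x + f y + (\<Sum>z\<in>V-{x,y}. f z)"
proof -
  have "(\<Sum>z\<in>V. f z) = f x + (\<Sum>z\<in>V-{x}. f z)" using assms by (simp add: sum.remove)
  also have "(\<Sum>z\<in>V-{x}. f z) = f y + (\<Sum>z\<in>V-{x}-{y}. f z)" using assms by (simp add: sum.remove)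
  also have "V-{x}-{y} = V-{x,y}" by auto
  finally show ?thesis by (simp add: add.assoc)
qed

lemma prod_two:
  fixes f :: "'a \<Rightarrow> 'b::comm_monoid_mult"
  assumes "finite V" "x \<in> V" "y \<in> V" "x \<noteq> y"
  shows "(\<Prod>z\<in>V. f z) = f x * f y * (\<Prod>z\<in>V-{x,y}. f z)"
proof -
  have "(\<Prod>z\<in>V. f z) = f x * (\<Prod>z\<in>V-{x}. f z)" using assms by (simp add: prod.remove)
  also have "(\<Prod>z\<in>V-{x}. f z) = f y * (\<Prod>z\<in>V-{x}-{y}. f z)" using assms by (simp add: prod.remove)
  also have "V-{x}-{y} = V-{x,y}" by auto
  finally show ?thesis by (simp add: mult.assoc)
qed

lemma configs_upd:
  assumes "\<xi> \<in> configs V M" "finite V" "x \<in> V" "y \<in> V" "x \<noteq> y"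
    "\<forall>z. z \<noteq> x \<and> z \<noteq> y \<longrightarrow> \<eta> z = \<xi> z" "\<eta> x + \<eta> y = \<xi> x + \<xi> y"
  shows "\<eta> \<in> configs V M"
proof -
  have "(\<Sum>z\<in>V. \<eta> z) = \<eta> x + \<eta> y + (\<Sum>z\<in>V-{x,y}. \<eta> z)" by (rule sum_two[OF assms(2-5)])
  also have "(\<Sum>z\<in>V-{x,y}. \<eta> z) = (\<Sum>z\<in>V-{x,y}. \<xi> z)" using assms(6) by (intro sum.cong) auto
  also have "\<eta> x + \<eta> y + (\<Sum>z\<in>V-{x,y}. \<xi> z) = \<xi> x + \<xi> y + (\<Sum>z\<in>V-{x,y}. \<xi> z)" using assms(7) by simp
  also have "\<dots> = (\<Sum>z\<in>V. \<xi> z)" by (rule sum_two[OF assms(2-5), symmetric])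
  finally show ?thesis using assms(1,3,4,6) unfolding configs_def by auto
qed

lemma configs_finite:
  assumes "finite V"
  shows "finite (configs V M)"
proof -
  have "configs V M \<subseteq> (\<lambda>f z. if z \<in> V then f z else 0) ` (PiE V (\<lambda>_. {..M}))"
  proof
    fix \<xi> assume h: "\<xi> \<in> configs V M"
    have le: "\<xi> z \<le> M" if "z \<in> V" for z
    proof -
      have "\<xi> z \<le> (\<Sum>t\<in>V. \<xi> t)" using that assms by (intro member_le_sum) auto
      then show ?thesis using h unfolding configs_def by simp
    qed
    have "\<xi> = (\<lambda>z. if z \<in> V then restrict \<xi> V z else 0)" using h unfolding configs_def by (auto simp: fun_eq_iff restrict_apply)
    moreover have "restrict \<xi> V \<in> PiE V (\<lambda>_. {..M})" using le by auto
    ultimately show "\<xi> \<in> (\<lambda>f z. if z \<in> V then f z else 0) ` (PiE V (\<lambda>_. {..M}))" by blast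
  qed
  then show ?thesis by (rule finite_subset) (intro finite_imageI finite_PiE assms, auto)
qed

lemma configs_ne:
  assumes "finite V" "V \<noteq> {}" shows "configs V M \<noteq> {}"
proof -
  obtain v where v: "v \<in> V" using assms by auto
  have "(\<lambda>z. if z = v then M else 0) \<in> configs V M"
    using v assms unfolding configs_def by (auto simp: sum.delta)
  then show ?thesis by auto
qed

lemma sum_filter_le:
  fixes g :: "nat \<Rightarrow> real"
  shows "(\<Sum>c\<le>a. if c \<le> a' then g c else 0) = (\<Sum>c\<le>min a a'. g c)"
proof -
  have "{c\<in>{..a}. c \<le> a'} = {..min a a'}" by auto
  then show ?thesis using sum.inter_filter[of "{..a}" g "\<lambda>c. c \<le> a'"] by simp
qed

lemma edge_kernel_formula:
  assumes xy: "x \<noteq> y"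
  shows "edge_kernel x y \<xi> \<eta> =
    (if (\<forall>z. z \<noteq> x \<and> z \<noteq> y \<longrightarrow> \<eta> z = \<xi> z) \<and> \<eta> x + \<eta> y = \<xi> x + \<xi> y
     then (\<Sum>cx\<le>min (\<xi> x) (\<eta> x). \<Sum>cy\<le>min (\<xi> y) (\<eta> y). 1 / real (\<xi> x + \<xi> y - cx - cy + 1)) / (real (\<xi> x + 1) * real (\<xi> y + 1))
     else 0)"
proof -
  define Q where "Q \<longleftrightarrow> (\<forall>z. z \<noteq> x \<and> z \<noteq> y \<longrightarrow> \<eta> z = \<xi> z) \<and> \<eta> x + \<eta> y = \<xi> x + \<xi> y"
  define w where "w = (\<lambda>cx cy. 1 / (real (\<xi> x + 1) * real (\<xi> y + 1) * real (\<xi> x + \<xi> y - cx - cy + 1)))"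
  have step1: "(\<eta> = \<xi>(x := cx + u, y := \<xi> x + \<xi> y - cx - u)) \<longleftrightarrow> (Q \<and> cx \<le> \<eta> x \<and> \<eta> x - cx = u)"
    if "cx \<le> \<xi> x" "cy \<le> \<xi> y" "u \<le> \<xi> x + \<xi> y - cx - cy" for cx cy u
  proof
    assume h: "\<eta> = \<xi>(x := cx + u, y := \<xi> x + \<xi> y - cx - u)"
    then have "\<eta> x = cx + u" "\<eta> y = \<xi> x + \<xi> y - cx - u" using xy by auto
    then show "Q \<and> cx \<le> \<eta> x \<and> \<eta> x - cx = u" using h that unfolding Q_def by auto
  next
    assume "Q \<and> cx \<le> \<eta> x \<and> \<eta> x - cx = u"
    then show "\<eta> = \<xi>(x := cx + u, y := \<xi> x + \<xi> y - cx - u)" using xy unfolding Q_def by (auto simp: fun_eq_iff)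
  qed
  have step2: "(\<Sum>u\<le>\<xi> x + \<xi> y - cx - cy. if \<eta> = \<xi>(x := cx + u, y := \<xi> x + \<xi> y - cx - u) then 1 / (real (\<xi> x + 1) * real (\<xi> y + 1) * real (\<xi> x + \<xi> y - cx - cy + 1)) else 0)
     = (if Q \<and> cx \<le> \<eta> x \<and> cy \<le> \<eta> y then w cx cy else 0)"
    if "cx \<le> \<xi> x" "cy \<le> \<xi> y" for cx cy
  proof -
    have "(\<Sum>u\<le>\<xi> x + \<xi> y - cx - cy. if \<eta> = \<xi>(x := cx + u, y := \<xi> x + \<xi> y - cx - u) then 1 / (real (\<xi> x + 1) * real (\<xi> y + 1) * real (\<xi> x + \<xi> y - cx - cy + 1)) else 0)
       = (\<Sum>u\<le>\<xi> x + \<xi> y - cx - cy. if Q \<and> cx \<le> \<eta> x \<and> \<eta> x - cx = u then w cx cy else 0)"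
      using step1[OF that] by (intro sum.cong) (auto simp: w_def)
    also have "\<dots> = (if Q \<and> cx \<le> \<eta> x then (\<Sum>u\<le>\<xi> x + \<xi> y - cx - cy. if \<eta> x - cx = u then w cx cy else 0) else 0)"
      by auto
    also have "\<dots> = (if Q \<and> cx \<le> \<eta> x then (if \<eta> x - cx \<le> \<xi> x + \<xi> y - cx - cy then w cx cy else 0) else 0)"
      by (simp add: sum.delta)
    also have "\<dots> = (if Q \<and> cx \<le> \<eta> x \<and> cy \<le> \<eta> y then w cx cy else 0)"
      using that unfolding Q_def by auto
    finally show ?thesis .
  qed
  have "edge_kernel x y \<xi> \<eta> = (\<Sum>cx\<le>\<xi> x. \<Sum>cy\<le>\<xi> y. if Q \<and> cx \<le> \<eta> x \<and> cy \<le> \<eta> y then w cx cy else 0)"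
    unfolding edge_kernel_def
    apply (rule sum.cong[OF refl])
    apply (rule sum.cong[OF refl])
    apply (rule step2)
    by auto
  also have "\<dots> = (if Q then (\<Sum>cx\<le>min (\<xi> x) (\<eta> x). \<Sum>cy\<le>min (\<xi> y) (\<eta> y). 1 / real (\<xi> x + \<xi> y - cx - cy + 1)) / (real (\<xi> x + 1) * real (\<xi> y + 1)) else 0)"
  proof (cases Q)
    case False then show ?thesis by simp
  next
    case True
    have "(\<Sum>cx\<le>\<xi> x. \<Sum>cy\<le>\<xi> y. if Q \<and> cx \<le> \<eta> x \<and> cy \<le> \<eta> y then w cx cy else 0)
      = (\<Sum>cx\<le>\<xi> x. if cx \<le> \<eta> x then (\<Sum>cy\<le>\<xi> y. if cy \<le> \<eta> y then w cx cy else 0) else 0)"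
      using True by (intro sum.cong) auto
    also have "\<dots> = (\<Sum>cx\<le>min (\<xi> x) (\<eta> x). \<Sum>cy\<le>min (\<xi> y) (\<eta> y). w cx cy)"
      by (simp add: sum_filter_le)
    also have "\<dots> = (\<Sum>cx\<le>min (\<xi> x) (\<eta> x). \<Sum>cy\<le>min (\<xi> y) (\<eta> y). 1 / real (\<xi> x + \<xi> y - cx - cy + 1)) / (real (\<xi> x + 1) * real (\<xi> y + 1))"
      by (simp add: w_def sum_divide_distrib mult.commute mult.left_commute)
    finally show ?thesis using True by simp
  qed
  finally show ?thesis unfolding Q_def .
qed

lemma edge_kernel_nonneg: "0 \<le> edge_kernel x y \<xi> \<eta>"
  unfolding edge_kernel_def by (intro sum_nonneg) auto

lemma usm_nonneg: "0 \<le> usm_kernel E \<xi> \<eta>"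
  unfolding usm_kernel_def
  by (auto intro!: sum_nonneg divide_nonneg_nonneg simp: edge_kernel_nonneg split: prod.splits)

lemma edge_kernel_pos:
  assumes "x \<noteq> y" "\<forall>z. z \<noteq> x \<and> z \<noteq> y \<longrightarrow> \<eta> z = \<xi> z" "\<eta> x + \<eta> y = \<xi> x + \<xi> y"
  shows "0 < edge_kernel x y \<xi> \<eta>"
  unfolding edge_kernel_formula[OF assms(1)] using assms(2,3)
  by (auto intro!: divide_pos_pos sum_pos)

lemma edge_rev:
  assumes "x \<noteq> y" "finite V" "x \<in> V" "y \<in> V"
  shows "mu V \<xi> * edge_kernel x y \<xi> \<eta> = mu V \<eta> * edge_kernel x y \<eta> \<xi>"
proof (cases "(\<forall>z. z \<noteq> x \<and> z \<noteq> y \<longrightarrow> \<eta> z = \<xi> z) \<and> \<eta> x + \<eta> y = \<xi> x + \<xi> y")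
  case False
  then have "\<not> ((\<forall>z. z \<noteq> x \<and> z \<noteq> y \<longrightarrow> \<xi> z = \<eta> z) \<and> \<xi> x + \<xi> y = \<eta> x + \<eta> y)" by auto
  then have "edge_kernel x y \<eta> \<xi> = 0" by (simp only: edge_kernel_formula[OF assms(1)] if_not_P if_False)
  moreover have "edge_kernel x y \<xi> \<eta> = 0" using False by (simp only: edge_kernel_formula[OF assms(1)] if_not_P if_False)
  ultimately show ?thesis by simp
next
  case True
  define R where "R = (\<Prod>z\<in>V-{x,y}. real (\<xi> z + 1))"
  have R2: "R = (\<Prod>z\<in>V-{x,y}. real (\<eta> z + 1))" unfolding R_def using True by (intro prod.cong) auto
  have m1: "mu V \<xi> = real (\<xi> x + 1) * real (\<xi> y + 1) * R" unfolding mu_def R_def by (rule prod_two[OF assms(2-4,1)])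
  have m2: "mu V \<eta> = real (\<eta> x + 1) * real (\<eta> y + 1) * R" unfolding mu_def R2 by (rule prod_two[OF assms(2-4,1)])
  define G where "G = (\<Sum>cx\<le>min (\<xi> x) (\<eta> x). \<Sum>cy\<le>min (\<xi> y) (\<eta> y). 1 / real (\<xi> x + \<xi> y - cx - cy + 1))"
  have G2: "G = (\<Sum>cx\<le>min (\<eta> x) (\<xi> x). \<Sum>cy\<le>min (\<eta> y) (\<xi> y). 1 / real (\<eta> x + \<eta> y - cx - cy + 1))"
    unfolding G_def using True by (simp add: min.commute)
  have T2: "(\<forall>z. z \<noteq> x \<and> z \<noteq> y \<longrightarrow> \<xi> z = \<eta> z) \<and> \<xi> x + \<xi> y = \<eta> x + \<eta> y" using True by auto
  have "edge_kernel x y \<xi> \<eta> = G / (real (\<xi> x + 1) * real (\<xi> y + 1))"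
    using True by (simp add: edge_kernel_formula[OF assms(1)] G_def)
  moreover have "edge_kernel x y \<eta> \<xi> = G / (real (\<eta> x + 1) * real (\<eta> y + 1))"
    unfolding edge_kernel_formula[OF assms(1)] if_P[OF T2] G2 by (rule refl)
  ultimately show ?thesis using m1 m2 by simp
qed

lemma cancel_aux: "(c::real) \<noteq> 0 \<Longrightarrow> c * (1 / (a * c)) = 1 / a"
  by (cases "a = 0") (auto simp: field_simps)

lemma sum_const_aux: "(\<Sum>u\<le>(n::nat). 1 / (a * real (n + 1))) = 1 / (a::real)"
proof -
  have "(\<Sum>u\<le>(n::nat). 1 / (a * real (n + 1))) = real (n + 1) * (1 / (a * real (n + 1)))"
    by (simp only: sum_constant card_atMost) simp
  also have "\<dots> = 1 / a" by (rule cancel_aux) simp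
  finally show ?thesis .
qed

lemma sum_const_aux2: "(\<Sum>i\<le>(a::nat). \<Sum>j\<le>(b::nat). 1 / (real (a + 1) * real (b + 1))) = 1"
proof -
  have "real (a+1) > 0" "real (b+1) > 0" by auto
  then show ?thesis by (simp only: sum_constant card_atMost) simp
qed

lemma edge_rowsum:
  assumes xy: "x \<noteq> y" and fV: "finite V" and xV: "x \<in> V" and yV: "y \<in> V" and xi: "\<xi> \<in> configs V M"
    and finC: "finite (configs V M)"
  shows "(\<Sum>\<eta>\<in>configs V M. edge_kernel x y \<xi> \<eta>) = 1"
proof -
  let ?C = "configs V M"
  let ?F = "\<lambda>cx u. \<xi>(x := cx + u, y := \<xi> x + \<xi> y - cx - u)"
  let ?w = "\<lambda>cx cy. 1 / (real (\<xi> x + 1) * real (\<xi> y + 1) * real (\<xi> x + \<xi> y - cx - cy + 1))"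
  have inC: "?F cx u \<in> ?C" if "u \<le> \<xi> x + \<xi> y - cx - cy" "cx \<le> \<xi> x" "cy \<le> \<xi> y" for cx cy u
    by (rule configs_upd[OF xi fV xV yV xy]) (use xy that in auto)
  have "(\<Sum>\<eta>\<in>?C. edge_kernel x y \<xi> \<eta>) = (\<Sum>\<eta>\<in>?C. \<Sum>cx\<le>\<xi> x. \<Sum>cy\<le>\<xi> y. \<Sum>u\<le>\<xi> x + \<xi> y - cx - cy. if \<eta> = ?F cx u then ?w cx cy else 0)"
    unfolding edge_kernel_def by simp
  also have "\<dots> = (\<Sum>cx\<le>\<xi> x. \<Sum>cy\<le>\<xi> y. \<Sum>u\<le>\<xi> x + \<xi> y - cx - cy. \<Sum>\<eta>\<in>?C. if \<eta> = ?F cx u then ?w cx cy else 0)"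
    apply (subst sum.swap[where A="?C"]) apply (rule sum.cong[OF refl]) apply (subst sum.swap[where A="?C"])
    apply (rule sum.cong[OF refl]) apply (subst sum.swap[where A="?C"]) apply (rule refl) done
  also have "\<dots> = (\<Sum>cx\<le>\<xi> x. \<Sum>cy\<le>\<xi> y. \<Sum>u\<le>\<xi> x + \<xi> y - cx - cy. ?w cx cy)"
    apply (rule sum.cong[OF refl])+ using inC finC by (auto simp: sum.delta)
  also have "\<dots> = (\<Sum>cx\<le>\<xi> x. \<Sum>cy\<le>\<xi> y. 1 / (real (\<xi> x + 1) * real (\<xi> y + 1)))"
    by (intro sum.cong refl) (rule sum_const_aux)
  also have "\<dots> = 1" by (rule sum_const_aux2)
  finally show ?thesis .
qed


lemma reach_all:
  assumes fV: "finite V" and SC: "S \<subseteq> configs V M" and x0: "\<xi>0 \<in> S"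
    and conn: "\<forall>x\<in>V. \<forall>y\<in>V. (x, y) \<in> R\<^sup>*"
    and cl: "\<And>\<zeta> v w. \<zeta> \<in> S \<Longrightarrow> (v, w) \<in> R \<Longrightarrow> 1 \<le> \<zeta> v \<Longrightarrow> mv \<zeta> v w \<in> S"
  shows "configs V M \<subseteq> S"
proof
  fix \<eta> assume \<eta>C: "\<eta> \<in> configs V M"
  have path: "mv \<xi> z w \<in> S" if "(z, w) \<in> R\<^sup>*" "\<xi> \<in> S" "1 \<le> \<xi> z" for z w \<xi>
    using that(1)
  proof (induction rule: rtrancl_induct)
    case base show ?case using that(2) mv_same[of \<xi> z, OF that(3)] by simp
  next
    case (step v w)
    have "mv (mv \<xi> z v) v w \<in> S" using cl[OF step.IH step.hyps(2) mv_ge] .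
    then show ?case by (simp add: mv_comp)
  qed
  have main: "\<forall>\<xi>. \<xi> \<in> S \<longrightarrow> (\<Sum>t\<in>V. \<xi> t - \<eta> t) = n \<longrightarrow> \<eta> \<in> S" for n
  proof (induction n)
    case 0
    show ?case
    proof (intro allI impI)
      fix \<xi> assume \<xi>S: "\<xi> \<in> S" and d: "(\<Sum>t\<in>V. \<xi> t - \<eta> t) = 0"
      have \<xi>C: "\<xi> \<in> configs V M" using \<xi>S SC by auto
      have le: "\<forall>t\<in>V. \<xi> t \<le> \<eta> t" using d fV by simp
      have "\<xi> = \<eta>"
      proof (rule ccontr)
        assume "\<xi> \<noteq> \<eta>"
        then obtain t where t: "\<xi> t \<noteq> \<eta> t" by auto
        have "t \<in> V"
        proof (rule ccontr)
          assume "t \<notin> V"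
          then have "\<xi> t = 0" "\<eta> t = 0" using \<xi>C \<eta>C unfolding configs_def by auto
          then show False using t by simp
        qed
        with le t have "\<exists>t\<in>V. \<xi> t < \<eta> t" by force
        then have "(\<Sum>t\<in>V. \<xi> t) < (\<Sum>t\<in>V. \<eta> t)" using fV le by (intro sum_strict_mono_ex1) auto
        then show False using \<xi>C \<eta>C unfolding configs_def by simp
      qed
      then show "\<eta> \<in> S" using \<xi>S by simp
    qed
  next
    case (Suc n)
    show ?case
    proof (intro allI impI)
      fix \<xi> assume \<xi>S: "\<xi> \<in> S" and d: "(\<Sum>t\<in>V. \<xi> t - \<eta> t) = Suc n"
      have \<xi>C: "\<xi> \<in> configs V M" using \<xi>S SC by auto
      have "\<exists>z\<in>V. \<eta> z < \<xi> z"
      proof (rule ccontr)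
        assume "\<not> (\<exists>z\<in>V. \<eta> z < \<xi> z)"
        then have "\<forall>t\<in>V. \<xi> t - \<eta> t = 0" by auto
        then have "(\<Sum>t\<in>V. \<xi> t - \<eta> t) = 0" by simp
        with d show False by simp
      qed
      then obtain z where zV: "z \<in> V" and z: "\<eta> z < \<xi> z" by blast
      have "\<exists>w\<in>V. \<xi> w < \<eta> w"
      proof (rule ccontr)
        assume "\<not> (\<exists>w\<in>V. \<xi> w < \<eta> w)"
        then have "\<forall>t\<in>V. \<eta> t \<le> \<xi> t" by auto
        then have "(\<Sum>t\<in>V. \<eta> t) < (\<Sum>t\<in>V. \<xi> t)" using fV zV z by (intro sum_strict_mono_ex1) auto
        then show False using \<xi>C \<eta>C unfolding configs_def by simp
      qed
      then obtain w where wV: "w \<in> V" and w: "\<xi> w < \<eta> w" by blast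
      have zw: "z \<noteq> w" using z w by auto
      have S': "mv \<xi> z w \<in> S" using path[of z w \<xi>] conn zV wV \<xi>S z by auto
      have e1: "(\<Sum>t\<in>V. \<xi> t - \<eta> t) = (\<xi> z - \<eta> z) + (\<Sum>t\<in>V-{z}. \<xi> t - \<eta> t)"
        using fV zV by (simp add: sum.remove)
      have e2: "(\<Sum>t\<in>V. mv \<xi> z w t - \<eta> t) = (mv \<xi> z w z - \<eta> z) + (\<Sum>t\<in>V-{z}. mv \<xi> z w t - \<eta> t)"
        using fV zV by (simp add: sum.remove)
      have e3: "(\<Sum>t\<in>V-{z}. mv \<xi> z w t - \<eta> t) = (\<Sum>t\<in>V-{z}. \<xi> t - \<eta> t)"
        by (rule sum.cong[OF refl]) (use w in \<open>auto simp: mv_def\<close>)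
      have e4: "mv \<xi> z w z - \<eta> z = \<xi> z - \<eta> z - 1" using zw by (simp add: mv_def)
      have "(\<Sum>t\<in>V. mv \<xi> z w t - \<eta> t) = n" using d z e1 e2 e3 e4 by linarith
      then show "\<eta> \<in> S" using Suc.IH S' by blast
    qed
  qed
  show "\<eta> \<in> S" using main x0 by blast
qed

theorem lemma6:
  fixes V :: "'a set" and E :: "('a \<times> 'a) set" and M :: nat
  assumes "finite V" and "V \<noteq> {}"
    and "E \<subseteq> V \<times> V" and "\<forall>(x, y)\<in>E. x \<noteq> y"
    and "\<forall>x\<in>V. \<forall>y\<in>V. (x, y) \<in> (E \<union> E\<inverse>)\<^sup>*"
  shows "let \<pi> = (\<lambda>\<xi>. mu V \<xi> / (\<Sum>\<eta>\<in>configs V M. mu V \<eta>)) in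
           is_distribution \<pi> (configs V M)
         \<and> is_stationary (usm_kernel E) \<pi> (configs V M)
         \<and> is_reversible (usm_kernel E) \<pi> (configs V M)
         \<and> (\<forall>p. is_distribution p (configs V M) \<and> is_stationary (usm_kernel E) p (configs V M)
                \<longrightarrow> (\<forall>\<xi>\<in>configs V M. p \<xi> = \<pi> \<xi>))"
proof -
  let ?C = "configs V M"
  let ?P = "usm_kernel E"
  define Z where "Z = (\<Sum>\<eta>\<in>?C. mu V \<eta>)"
  define \<pi> where "\<pi> = (\<lambda>\<xi>. mu V \<xi> / Z)"
  note fV = assms(1)
  have finE: "finite E" using assms(3) fV by (meson finite_SigmaI finite_subset)
  have finC: "finite ?C" by (rule configs_finite[OF fV])
  have neC: "?C \<noteq> {}" using configs_ne[OF fV assms(2)] .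
  have mupos: "0 < mu V \<xi>" for \<xi> unfolding mu_def by (intro prod_pos) auto
  have Zpos: "0 < Z" unfolding Z_def using finC neC mupos by (intro sum_pos) auto
  have pipos: "0 < \<pi> \<xi>" for \<xi> using mupos[of \<xi>] Zpos by (simp add: \<pi>_def)
  have Pnn: "0 \<le> ?P \<xi> \<eta>" for \<xi> \<eta> by (rule usm_nonneg)
  have edgeE: "x \<noteq> y \<and> x \<in> V \<and> y \<in> V" if "(x, y) \<in> E" for x y
    using that assms(3,4) by auto
  have row: "(\<Sum>\<eta>\<in>?C. ?P \<xi> \<eta>) = 1" if xi: "\<xi> \<in> ?C" for \<xi>
  proof (cases "E = {}")
    case True then show ?thesis using xi finC by (simp add: usm_kernel_def sum.delta sum.delta')
  next
    case False
    have "(\<Sum>\<eta>\<in>?C. ?P \<xi> \<eta>) = (\<Sum>\<eta>\<in>?C. \<Sum>e\<in>E. (case e of (x, y) \<Rightarrow> edge_kernel x y \<xi> \<eta>)) / real (card E)"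
      using False by (simp add: usm_kernel_def sum_divide_distrib)
    also have "\<dots> = (\<Sum>e\<in>E. \<Sum>\<eta>\<in>?C. (case e of (x, y) \<Rightarrow> edge_kernel x y \<xi> \<eta>)) / real (card E)"
      by (subst sum.swap) (rule refl)
    also have "\<dots> = (\<Sum>e\<in>E. 1) / real (card E)"
    proof -
      have "(\<Sum>\<eta>\<in>?C. (case e of (x, y) \<Rightarrow> edge_kernel x y \<xi> \<eta>)) = 1" if "e \<in> E" for e
      proof -
        obtain x y where e: "e = (x, y)" by (cases e)
        have "x \<noteq> y" "x \<in> V" "y \<in> V" using that e edgeE by auto
        then show ?thesis using e edge_rowsum[OF _ fV _ _ xi finC] by simp
      qed
      then show ?thesis by simp
    qed
    also have "\<dots> = 1" using False finE by simp
    finally show ?thesis .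
  qed
  have revmu: "mu V \<xi> * ?P \<xi> \<eta> = mu V \<eta> * ?P \<eta> \<xi>" for \<xi> \<eta>
  proof (cases "E = {}")
    case True then show ?thesis by (simp add: usm_kernel_def)
  next
    case False
    have "mu V \<xi> * (\<Sum>e\<in>E. (case e of (x, y) \<Rightarrow> edge_kernel x y \<xi> \<eta>)) = mu V \<eta> * (\<Sum>e\<in>E. (case e of (x, y) \<Rightarrow> edge_kernel x y \<eta> \<xi>))"
      unfolding sum_distrib_left
    proof (rule sum.cong[OF refl])
      fix e assume eE: "e \<in> E"
      obtain x y where e: "e = (x, y)" by (cases e)
      have "x \<noteq> y" "x \<in> V" "y \<in> V" using eE e edgeE by auto
      then show "mu V \<xi> * (case e of (x, y) \<Rightarrow> edge_kernel x y \<xi> \<eta>) = mu V \<eta> * (case e of (x, y) \<Rightarrow> edge_kernel x y \<eta> \<xi>)"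
        using e edge_rev[OF _ fV] by simp
    qed
    then show ?thesis using False by (simp add: usm_kernel_def)
  qed
  have rev: "\<pi> \<xi> * ?P \<xi> \<eta> = \<pi> \<eta> * ?P \<eta> \<xi>" for \<xi> \<eta>
    using revmu[of \<xi> \<eta>] by (simp add: \<pi>_def)
  have dist: "is_distribution \<pi> ?C"
    unfolding is_distribution_def
  proof
    show "\<forall>s\<in>?C. 0 \<le> \<pi> s" using pipos by (simp add: less_imp_le)
    show "(\<Sum>s\<in>?C. \<pi> s) = 1" using Zpos unfolding \<pi>_def by (simp add: sum_divide_distrib[symmetric] Z_def)
  qed
  have stat: "is_stationary ?P \<pi> ?C"
    unfolding is_stationary_def
  proof
    fix \<eta> assume \<eta>C: "\<eta> \<in> ?C"
    have "(\<Sum>\<xi>\<in>?C. \<pi> \<xi> * ?P \<xi> \<eta>) = (\<Sum>\<xi>\<in>?C. \<pi> \<eta> * ?P \<eta> \<xi>)" using rev by simp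
    also have "\<dots> = \<pi> \<eta> * (\<Sum>\<xi>\<in>?C. ?P \<eta> \<xi>)" by (simp add: sum_distrib_left)
    also have "\<dots> = \<pi> \<eta>" using row[OF \<eta>C] by simp
    finally show "(\<Sum>\<xi>\<in>?C. \<pi> \<xi> * ?P \<xi> \<eta>) = \<pi> \<eta>" .
  qed
  have reversible: "is_reversible ?P \<pi> ?C" unfolding is_reversible_def using rev by simp
  have Ppos: "0 < ?P \<zeta> \<eta>" if "(v, w) \<in> E \<union> E\<inverse>" "\<forall>z. z \<noteq> v \<and> z \<noteq> w \<longrightarrow> \<eta> z = \<zeta> z"
    "\<eta> v + \<eta> w = \<zeta> v + \<zeta> w" for v w \<zeta> \<eta>
  proof -
    have Ene: "E \<noteq> {}" using that(1) by auto
    have "(v, w) \<in> E \<or> (w, v) \<in> E" using that(1) by auto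
    then obtain x y where xyE: "(x, y) \<in> E" and vw: "(x = v \<and> y = w) \<or> (x = w \<and> y = v)" by blast
    have xy: "x \<noteq> y" using xyE edgeE by auto
    have "0 < edge_kernel x y \<zeta> \<eta>" using vw that(2,3) by (intro edge_kernel_pos[OF xy]) auto
    also have "edge_kernel x y \<zeta> \<eta> \<le> (\<Sum>e\<in>E. (case e of (x, y) \<Rightarrow> edge_kernel x y \<zeta> \<eta>))"
      using member_le_sum[of "(x,y)" E "\<lambda>e. (case e of (x, y) \<Rightarrow> edge_kernel x y \<zeta> \<eta>)"] xyE finE
      by (simp add: edge_kernel_nonneg split: prod.splits)
    finally show ?thesis using Ene finE by (simp add: usm_kernel_def card_gt_0_iff)
  qed
  have uniq: "\<forall>\<xi>\<in>?C. p \<xi> = \<pi> \<xi>" if pd: "is_distribution p ?C" and ps: "is_stationary ?P p ?C" for p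
  proof -
    define h where "h = (\<lambda>\<xi>. p \<xi> / \<pi> \<xi>)"
    have ph: "p \<xi> = h \<xi> * \<pi> \<xi>" for \<xi> using pipos[of \<xi>] by (simp add: h_def)
    have harm: "h \<eta> = (\<Sum>\<xi>\<in>?C. ?P \<eta> \<xi> * h \<xi>)" if \<eta>C: "\<eta> \<in> ?C" for \<eta>
    proof -
      have "p \<eta> = (\<Sum>\<xi>\<in>?C. p \<xi> * ?P \<xi> \<eta>)" using ps \<eta>C unfolding is_stationary_def by simp
      also have "\<dots> = (\<Sum>\<xi>\<in>?C. \<pi> \<eta> * (?P \<eta> \<xi> * h \<xi>))"
      proof (rule sum.cong[OF refl])
        fix \<xi> assume "\<xi> \<in> ?C"
        have "p \<xi> * ?P \<xi> \<eta> = h \<xi> * (\<pi> \<xi> * ?P \<xi> \<eta>)" by (simp add: ph)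
        also have "\<dots> = h \<xi> * (\<pi> \<eta> * ?P \<eta> \<xi>)" using rev[of \<xi> \<eta>] by simp
        finally show "p \<xi> * ?P \<xi> \<eta> = \<pi> \<eta> * (?P \<eta> \<xi> * h \<xi>)" by simp
      qed
      also have "\<dots> = \<pi> \<eta> * (\<Sum>\<xi>\<in>?C. ?P \<eta> \<xi> * h \<xi>)" by (simp add: sum_distrib_left)
      finally have "h \<eta> * \<pi> \<eta> = (\<Sum>\<xi>\<in>?C. ?P \<eta> \<xi> * h \<xi>) * \<pi> \<eta>" using ph[of \<eta>] by simp
      then show ?thesis using pipos[of \<eta>] by simp
    qed
    define m where "m = Max (h ` ?C)"
    have hle: "h \<xi> \<le> m" if "\<xi> \<in> ?C" for \<xi> unfolding m_def using finC that by auto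
    have close: "h \<zeta> = m" if "\<xi> \<in> ?C" "h \<xi> = m" "\<zeta> \<in> ?C" "0 < ?P \<xi> \<zeta>" for \<xi> \<zeta>
    proof -
      have "(\<Sum>\<zeta>'\<in>?C. ?P \<xi> \<zeta>' * (m - h \<zeta>')) = (\<Sum>\<zeta>'\<in>?C. ?P \<xi> \<zeta>' * m) - (\<Sum>\<zeta>'\<in>?C. ?P \<xi> \<zeta>' * h \<zeta>')"
        by (simp add: right_diff_distrib sum_subtractf)
      also have "(\<Sum>\<zeta>'\<in>?C. ?P \<xi> \<zeta>' * m) = m" using row[OF that(1)] by (simp add: sum_distrib_right[symmetric])
      also have "(\<Sum>\<zeta>'\<in>?C. ?P \<xi> \<zeta>' * h \<zeta>') = m" using harm[OF that(1)] that(2) by simp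
      finally have s0: "(\<Sum>\<zeta>'\<in>?C. ?P \<xi> \<zeta>' * (m - h \<zeta>')) = 0" by simp
      have "\<forall>\<zeta>'\<in>?C. ?P \<xi> \<zeta>' * (m - h \<zeta>') = 0"
        using s0 finC Pnn hle by (subst sum_nonneg_eq_0_iff[symmetric]) auto
      then have "?P \<xi> \<zeta> * (m - h \<zeta>) = 0" using that(3) by blast
      then show ?thesis using that(4) by simp
    qed
    define S where "S = {\<xi>\<in>?C. h \<xi> = m}"
    have "m \<in> h ` ?C" unfolding m_def using finC neC by (intro Max_in) auto
    then obtain \<xi>0 where "\<xi>0 \<in> ?C" "h \<xi>0 = m" by auto
    then have x0: "\<xi>0 \<in> S" unfolding S_def by auto
    have cl: "mv \<zeta> v w \<in> S" if "\<zeta> \<in> S" "(v, w) \<in> E \<union> E\<inverse>" "1 \<le> \<zeta> v" for \<zeta> v w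
    proof -
      have vw: "v \<noteq> w" "v \<in> V" "w \<in> V" using that(2) edgeE by auto
      have \<zeta>C: "\<zeta> \<in> ?C" and h\<zeta>: "h \<zeta> = m" using that(1) unfolding S_def by auto
      have a1: "\<forall>z. z \<noteq> v \<and> z \<noteq> w \<longrightarrow> mv \<zeta> v w z = \<zeta> z" by (simp add: mv_def)
      have a2: "mv \<zeta> v w v + mv \<zeta> v w w = \<zeta> v + \<zeta> w" using vw that(3) by (simp add: mv_def)
      have inC: "mv \<zeta> v w \<in> ?C" by (rule configs_upd[OF \<zeta>C fV vw(2,3,1) a1 a2])
      have "0 < ?P \<zeta> (mv \<zeta> v w)" by (rule Ppos[OF that(2) a1 a2])
      then have "h (mv \<zeta> v w) = m" using close[OF \<zeta>C h\<zeta> inC] by simp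
      then show ?thesis using inC unfolding S_def by simp
    qed
    have allS: "?C \<subseteq> S"
      by (rule reach_all[OF fV _ x0 assms(5) cl]) (auto simp: S_def)
    have pm: "p \<xi> = m * \<pi> \<xi>" if "\<xi> \<in> ?C" for \<xi> using allS that ph[of \<xi>] unfolding S_def by auto
    have "1 = (\<Sum>\<xi>\<in>?C. p \<xi>)" using pd unfolding is_distribution_def by simp
    also have "\<dots> = (\<Sum>\<xi>\<in>?C. m * \<pi> \<xi>)" using pm by simp
    also have "\<dots> = m" using dist unfolding is_distribution_def by (simp add: sum_distrib_left[symmetric])
    finally have "m = 1" by simp
    then show ?thesis using pm by simp
  qed
  have pe: "(\<lambda>\<xi>. mu V \<xi> / (\<Sum>\<eta>\<in>configs V M. mu V \<eta>)) = \<pi>" by (simp add: \<pi>_def Z_def)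
  show ?thesis unfolding pe Let_def using dist stat reversible uniq by blast
qed

end
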